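(* Under the standing setting and assumptions (A1)–(A3) described in the context, assume $\mathcal A$ is polyhedral. Then $\mathcal R(X)\neq\emptyset$ for every $X\in\mathcal X$.
   Context: Let $\mathcal X$ be a Hausdorff, first countable, locally convex topological vector space over $\mathbb R$ with dual $\mathcal X'$, partially ordered by a partial order $\geq$ with positive cone $\mathcal X_+=\{X\in\mathcal X: X\geq 0\}$. Let $\mathcal M\subset\mathcal X$ be a vector subspace with $1<\dim\mathcal M<\infty$, carrying the relative topology, and let $\pi:\mathcal M\to\mathbb R$ be linear. Standing assumptions: (A1) there is $U\in\mathcal M\cap\mathcal X_+$ with $\pi(U)=1$; (A2) $\mathcal A\subsetneq\mathcal X$ is closed, contains $0$, and satisfies $\mathcal A+\mathcal X_+\subset\mathcal A$; (A3) the map $\rho(X)=\inf\{\pi(Z): Z\in\mathcal M,\ X+Z\in\mathcal A\}$ is finitely valued and continuous on $\mathcal X$. The optimal payoff map is $\mathcal R(X)=\{Z\in\mathcal M: X+Z\in\mathcal A,\ \pi(Z)=\rho(X)\}$. $\mathcal A$ is polyhedral if it is a finite intersection of sets $\{X\in\mathcal X:\varphi(X)\geq\alpha\}$ with $\varphi\in\mathcal X'$, $\alpha\in\mathbb R$. *)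

theory Defs
  imports "HOL-Analysis.Analysis"
begin

definition tvs_ops :: "('a::{real_vector,topological_space}) itself \<Rightarrow> bool" where
  "tvs_ops _ \<longleftrightarrow>
     continuous_on UNIV (\<lambda>p::'a \<times> 'a. fst p + snd p) \<and>
     continuous_on UNIV (\<lambda>p::real \<times> 'a. fst p *\<^sub>R snd p)"

definition locally_convex :: "('a::{real_vector,topological_space}) itself \<Rightarrow> bool" where
  "locally_convex _ \<longleftrightarrow>
     (\<forall>U::'a set. open U \<and> 0 \<in> U \<longrightarrow> (\<exists>V. open V \<and> convex V \<and> 0 \<in> V \<and> V \<subseteq> U))"

definition topdual :: "('a::{real_vector,topological_space} \<Rightarrow> real) set" where
  "topdual = {\<phi>. linear \<phi> \<and> continuous_on UNIV \<phi>}"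

definition partial_order_rel :: "('a \<Rightarrow> 'a \<Rightarrow> bool) \<Rightarrow> bool" where
  "partial_order_rel ge \<longleftrightarrow> (\<forall>x. ge x x) \<and> (\<forall>x y. ge x y \<and> ge y x \<longrightarrow> x = y)
     \<and> (\<forall>x y z. ge x y \<and> ge y z \<longrightarrow> ge x z)"

definition linear_on :: "'a::real_vector set \<Rightarrow> ('a \<Rightarrow> real) \<Rightarrow> bool" where
  "linear_on M \<pi> \<longleftrightarrow> (\<forall>x\<in>M. \<forall>y\<in>M. \<pi> (x + y) = \<pi> x + \<pi> y) \<and>
     (\<forall>c. \<forall>x\<in>M. \<pi> (c *\<^sub>R x) = c * \<pi> x)"

definition adm_prices :: "'a::real_vector set \<Rightarrow> ('a \<Rightarrow> real) \<Rightarrow> 'a set \<Rightarrow> 'a \<Rightarrow> real set" where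
  "adm_prices M \<pi> A X = {\<pi> Z | Z. Z \<in> M \<and> X + Z \<in> A}"

definition rho :: "'a::real_vector set \<Rightarrow> ('a \<Rightarrow> real) \<Rightarrow> 'a set \<Rightarrow> 'a \<Rightarrow> real" where
  "rho M \<pi> A X = Inf (adm_prices M \<pi> A X)"

definition optimal_payoffs :: "'a::real_vector set \<Rightarrow> ('a \<Rightarrow> real) \<Rightarrow> 'a set \<Rightarrow> 'a \<Rightarrow> 'a set" where
  "optimal_payoffs M \<pi> A X = {Z \<in> M. X + Z \<in> A \<and> \<pi> Z = rho M \<pi> A X}"

definition polyhedral_set :: "'a::{real_vector,topological_space} set \<Rightarrow> bool" where
  "polyhedral_set A \<longleftrightarrow> (\<exists>\<Phi>::(('a \<Rightarrow> real) \<times> real) set. finite \<Phi> \<and>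
      (\<forall>(\<phi>, \<alpha>)\<in>\<Phi>. \<phi> \<in> topdual) \<and> A = {X. \<forall>(\<phi>, \<alpha>)\<in>\<Phi>. \<phi> X \<ge> \<alpha>})"

end

theory Submission
  imports Defs
begin

definition feas :: "'a::real_vector set \<Rightarrow> 'a \<Rightarrow> (('a \<Rightarrow> real) \<times> real) set \<Rightarrow> (('a \<Rightarrow> real) \<times> real) set \<Rightarrow> 'a \<Rightarrow> bool" where
  "feas S X I J z \<longleftrightarrow> z \<in> S \<and> (\<forall>(\<phi>,\<alpha>)\<in>I. \<alpha> \<le> \<phi> (X + z)) \<and> (\<forall>(\<phi>,\<alpha>)\<in>J. \<phi> (X + z) = \<alpha>)"

lemma step_claim:
  fixes c :: "'a::real_vector \<Rightarrow> real"
  assumes S: "subspace S" and cl: "linear_on S c" and fin: "finite I"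
    and lin: "\<forall>(\<phi>,\<alpha>)\<in>I\<union>J. linear \<phi>"
    and bdd: "\<forall>z. feas S X I J z \<longrightarrow> b \<le> c z"
    and d: "d \<in> S" "c d < 0" "\<forall>(\<phi>,\<alpha>)\<in>J. \<phi> d = 0"
    and z: "feas S X I J z"
  shows "\<exists>i\<in>I. \<exists>z'. feas S X (I - {i}) (insert i J) z' \<and> c z' \<le> c z"
proof -
  have zS: "z \<in> S" using z by (simp add: feas_def)
  have cz: "c (z + t *\<^sub>R d) = c z + t * c d" for t
    using cl zS d(1) S by (simp add: linear_on_def subspace_scale)
  have lz: "\<phi> (X + (z + t *\<^sub>R d)) = \<phi> (X + z) + t * \<phi> d" if "(\<phi>,\<alpha>) \<in> I \<union> J" for \<phi> \<alpha> t
  proof -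
    have "linear \<phi>" using lin that by auto
    then show ?thesis by (simp add: linear_add linear_scale add.assoc)
  qed
  define T where "T = {i \<in> I. fst i d < 0}"
  define r where "r = (\<lambda>i::('a \<Rightarrow> real) \<times> real. (fst i (X + z) - snd i) / (- fst i d))"
  show ?thesis
  proof (cases "T = {}")
    case True
    define t where "t = (c z - b + 1) / (- c d)"
    have t0: "t \<ge> 0"
    proof -
      have "c z \<ge> b" using bdd z by auto
      then show ?thesis using d(2) unfolding t_def by (simp add: divide_nonneg_neg)
    qed
    have "feas S X I J (z + t *\<^sub>R d)"
      unfolding feas_def
    proof (intro conjI)
      show "z + t *\<^sub>R d \<in> S" using zS d(1) S by (simp add: subspace_add subspace_scale)
      show "\<forall>(\<phi>,\<alpha>)\<in>I. \<alpha> \<le> \<phi> (X + (z + t *\<^sub>R d))"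
      proof (clarify)
        fix \<phi> \<alpha> assume i: "(\<phi>,\<alpha>) \<in> I"
        have "\<phi> d \<ge> 0" using True i unfolding T_def by force
        moreover have "\<alpha> \<le> \<phi> (X + z)" using z i unfolding feas_def by auto
        moreover have "0 \<le> t * \<phi> d" using t0 \<open>\<phi> d \<ge> 0\<close> by simp
        ultimately show "\<alpha> \<le> \<phi> (X + (z + t *\<^sub>R d))" using lz[of \<phi> \<alpha> t] i by simp
      qed
      show "\<forall>(\<phi>,\<alpha>)\<in>J. \<phi> (X + (z + t *\<^sub>R d)) = \<alpha>"
      proof (clarify)
        fix \<phi> \<alpha> assume i: "(\<phi>,\<alpha>) \<in> J"
        have "\<phi> d = 0" using d(3) i by auto
        moreover have "\<phi> (X + z) = \<alpha>" using z i unfolding feas_def by auto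
        ultimately show "\<phi> (X + (z + t *\<^sub>R d)) = \<alpha>" using lz[of \<phi> \<alpha> t] i by simp
      qed
    qed
    then have "b \<le> c z + t * c d" using bdd cz by metis
    moreover have "t * c d = -(c z - b + 1)" using d(2) unfolding t_def by (simp add: field_simps)
    ultimately show ?thesis by simp
  next
    case False
    have Tfin: "finite T" using fin unfolding T_def by auto
    obtain i0 where i0: "i0 \<in> T" "\<forall>i\<in>T. r i0 \<le> r i"
      using ex_min_if_finite[OF Tfin False] by (metis Tfin False arg_min_if_finite(1) arg_min_least)
    obtain \<phi>0 \<alpha>0 where i0e: "i0 = (\<phi>0, \<alpha>0)" by fastforce
    define t where "t = r i0"
    have i0I: "i0 \<in> I" and nd: "\<phi>0 d < 0" using i0 i0e unfolding T_def by auto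
    have t0: "t \<ge> 0"
    proof -
      have "\<alpha>0 \<le> \<phi>0 (X + z)" using z i0I i0e unfolding feas_def by auto
      then show ?thesis using nd unfolding t_def r_def i0e by (simp add: divide_nonneg_neg)
    qed
    have z'S: "z + t *\<^sub>R d \<in> S" using zS d(1) S by (simp add: subspace_add subspace_scale)
    have allI': "\<alpha> \<le> \<phi> (X + (z + t *\<^sub>R d))" if i: "(\<phi>,\<alpha>) \<in> I" for \<phi> \<alpha>
    proof -
      have a: "\<alpha> \<le> \<phi> (X + z)" using z i unfolding feas_def by auto
      show ?thesis
      proof (cases "\<phi> d < 0")
        case True
        then have "(\<phi>,\<alpha>) \<in> T" using i unfolding T_def by auto
        then have "t \<le> (\<phi> (X + z) - \<alpha>) / (- \<phi> d)" using i0 unfolding t_def r_def by force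
        then have "t * (- \<phi> d) \<le> \<phi> (X + z) - \<alpha>" using True pos_le_divide_eq[of "- \<phi> d"] by auto
        then show ?thesis using lz[of \<phi> \<alpha> t] i by (simp add: algebra_simps)
      next
        case False
        then have "0 \<le> t * \<phi> d" using t0 by simp
        then show ?thesis using lz[of \<phi> \<alpha> t] i a by simp
      qed
    qed
    have eq0: "\<phi>0 (X + (z + t *\<^sub>R d)) = \<alpha>0"
      using lz[of \<phi>0 \<alpha>0 t] i0I i0e nd unfolding t_def r_def by (simp add: field_simps)
    have "feas S X (I - {i0}) (insert i0 J) (z + t *\<^sub>R d)"
      unfolding feas_def
    proof (intro conjI)
      show "z + t *\<^sub>R d \<in> S" by (rule z'S)
      show "\<forall>(\<phi>,\<alpha>)\<in>I - {i0}. \<alpha> \<le> \<phi> (X + (z + t *\<^sub>R d))" using allI' by auto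
      show "\<forall>(\<phi>,\<alpha>)\<in>insert i0 J. \<phi> (X + (z + t *\<^sub>R d)) = \<alpha>"
      proof (clarify)
        fix \<phi> \<alpha> assume i: "(\<phi>,\<alpha>) \<in> insert i0 J"
        show "\<phi> (X + (z + t *\<^sub>R d)) = \<alpha>"
        proof (cases "(\<phi>,\<alpha>) = i0")
          case True then show ?thesis using eq0 i0e by auto
        next
          case False
          then have j: "(\<phi>,\<alpha>) \<in> J" using i by auto
          have "\<phi> d = 0" using d(3) j by auto
          moreover have "\<phi> (X + z) = \<alpha>" using z j unfolding feas_def by auto
          ultimately show ?thesis using lz[of \<phi> \<alpha> t] j by simp
        qed
      qed
    qed
    moreover have "c (z + t *\<^sub>R d) \<le> c z" using cz t0 d(2) by (simp add: mult_nonneg_nonpos)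
    ultimately show ?thesis using i0I by blast
  qed
qed


lemma feas_empty: "feas S X I J z \<Longrightarrow> feas S X {} J z"
  unfolding feas_def by simp

lemma feas_relax: "feas S X (I - {i}) (insert i J) z \<Longrightarrow> feas S X I J z"
  unfolding feas_def by (cases i) (auto split: prod.splits)

lemma lp_attain:
  fixes c :: "'a::real_vector \<Rightarrow> real"
  assumes S: "subspace S" and cl: "linear_on S c" and fin: "finite I"
    and lin: "\<forall>(\<phi>,\<alpha>)\<in>I\<union>J. linear \<phi>"
    and bdd: "\<forall>z. feas S X I J z \<longrightarrow> b \<le> c z"
    and z0: "feas S X I J z0"
  shows "\<exists>w. feas S X I J w \<and> (\<forall>z. feas S X I J z \<longrightarrow> c w \<le> c z)"
  using fin lin bdd z0
proof (induction I arbitrary: J z0 rule: finite_psubset_induct)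
  case (psubset I)
  show ?case
  proof (cases "\<forall>p q. feas S X {} J p \<and> feas S X {} J q \<longrightarrow> c p = c q")
    case True
    have "\<forall>z. feas S X I J z \<longrightarrow> c z0 \<le> c z"
    proof (intro allI impI)
      fix z assume "feas S X I J z"
      then have "feas S X {} J z" "feas S X {} J z0" using psubset.prems(3) by (simp_all add: feas_empty)
      then show "c z0 \<le> c z" using True[rule_format, of z z0] by simp
    qed
    then show ?thesis using psubset.prems(3) by blast
  next
    case False
    then obtain p q where pq: "feas S X {} J p" "feas S X {} J q" "c p \<noteq> c q" by blast
    have pS: "p \<in> S" and qS: "q \<in> S" using pq by (auto simp: feas_def)
    have linJ: "linear \<phi>" if "(\<phi>,\<alpha>) \<in> J" for \<phi> \<alpha> using psubset.prems(1) that by auto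
    have cdiff: "c (q - p) = c q - c p"
    proof -
      have qp: "q - p \<in> S" using pS qS S by (simp add: subspace_diff)
      have "c (q - p + p) = c (q - p) + c p" using cl qp pS unfolding linear_on_def by blast
      then show ?thesis by simp
    qed
    have qp': "q - p \<in> S" using pS qS S by (simp add: subspace_diff)
    have cneg0: "c ((-1) *\<^sub>R (q - p)) = (-1) * c (q - p)"
      using cl qp' unfolding linear_on_def by blast
    have cneg: "c (-1 *\<^sub>R (q - p)) = - c (q - p)" using cneg0 by simp
    have J0: "\<forall>(\<phi>,\<alpha>)\<in>J. \<phi> (q - p) = 0"
    proof clarify
      fix \<phi> \<alpha> assume j: "(\<phi>,\<alpha>) \<in> J"
      have "\<phi> (X + q) = \<alpha>" "\<phi> (X + p) = \<alpha>" using pq j by (auto simp: feas_def)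
      moreover have "\<phi> (q - p) = \<phi> (X + q) - \<phi> (X + p)" using linJ[OF j] by (simp add: linear_diff linear_add)
      ultimately show "\<phi> (q - p) = 0" by simp
    qed
    obtain d where d: "d \<in> S" "c d < 0" "\<forall>(\<phi>,\<alpha>)\<in>J. \<phi> d = 0"
    proof (cases "c (q - p) < 0")
      case True
      then show ?thesis using that[of "q - p"] J0 pS qS S by (simp add: subspace_diff)
    next
      case False
      then have "c (q - p) > 0" using cdiff pq(3) by auto
      moreover have "\<forall>(\<phi>,\<alpha>)\<in>J. \<phi> (-1 *\<^sub>R (q - p)) = 0"
      proof clarify
        fix \<phi> \<alpha> assume j: "(\<phi>,\<alpha>) \<in> J"
        have "\<phi> (q - p) = 0" using J0 j by auto
        then show "\<phi> (-1 *\<^sub>R (q - p)) = 0" using linear_scale[OF linJ[OF j], of "-1" "q - p"] by simp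
      qed
      ultimately show ?thesis using that[of "-1 *\<^sub>R (q - p)"] cneg pS qS S by (simp add: subspace_diff subspace_neg)
    qed
    have claim: "\<exists>i\<in>I. \<exists>z'. feas S X (I - {i}) (insert i J) z' \<and> c z' \<le> c z"
      if "feas S X I J z" for z
      using step_claim[OF S cl psubset.hyps(1) psubset.prems(1) psubset.prems(2) d that] .
    define G where "G = {i \<in> I. \<exists>z'. feas S X (I - {i}) (insert i J) z'}"
    have Gne: "G \<noteq> {}" using claim[OF psubset.prems(3)] unfolding G_def by blast
    have Gfin: "finite G" using psubset.hyps(1) unfolding G_def by auto
    have minG: "\<exists>w. feas S X (I - {i}) (insert i J) w \<and> (\<forall>z. feas S X (I - {i}) (insert i J) z \<longrightarrow> c w \<le> c z)"
      if iG: "i \<in> G" for i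
    proof -
      have iI: "i \<in> I" using iG unfolding G_def by auto
      obtain z' where z': "feas S X (I - {i}) (insert i J) z'" using iG unfolding G_def by auto
      have sub: "feas S X I J z" if "feas S X (I - {i}) (insert i J) z" for z
        using that by (rule feas_relax)
      show ?thesis
      proof (rule psubset.IH)
        show "I - {i} \<subset> I" using iI by auto
        show "\<forall>(\<phi>,\<alpha>)\<in>(I - {i}) \<union> insert i J. linear \<phi>" using psubset.prems(1) iI by auto
        show "\<forall>z. feas S X (I - {i}) (insert i J) z \<longrightarrow> b \<le> c z" using sub psubset.prems(2) by blast
        show "feas S X (I - {i}) (insert i J) z'" by (rule z')
      qed
    qed
    then have ex: "\<forall>i\<in>G. \<exists>w. feas S X (I - {i}) (insert i J) w \<and> (\<forall>z. feas S X (I - {i}) (insert i J) z \<longrightarrow> c w \<le> c z)"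
      by blast
    from bchoice[OF ex] obtain W where W: "\<forall>i\<in>G. feas S X (I - {i}) (insert i J) (W i) \<and> (\<forall>z. feas S X (I - {i}) (insert i J) z \<longrightarrow> c (W i) \<le> c z)"
      by blast
    define i0 where "i0 = arg_min_on (\<lambda>i. c (W i)) G"
    have i0: "i0 \<in> G" "\<forall>i\<in>G. c (W i0) \<le> c (W i)"
      unfolding i0_def using arg_min_if_finite(1)[OF Gfin Gne] arg_min_least[OF Gfin Gne] by auto
    have i0I: "i0 \<in> I" using i0 unfolding G_def by auto
    have wfeas: "feas S X I J (W i0)"
      using W i0(1) feas_relax by blast
    have "\<forall>z. feas S X I J z \<longrightarrow> c (W i0) \<le> c z"
    proof (intro allI impI)
      fix z assume "feas S X I J z"
      then obtain i z' where iz: "i \<in> I" "feas S X (I - {i}) (insert i J) z'" "c z' \<le> c z"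
        using claim by blast
      then have iG: "i \<in> G" unfolding G_def by blast
      have "c (W i) \<le> c z'" using W iG iz(2) by blast
      then show "c (W i0) \<le> c z" using i0(2) iG iz(3) by fastforce
    qed
    then show ?thesis using wfeas by blast
  qed
qed

theorem mainTheorem10:
  fixes ge :: "'a::{real_vector, t2_space, first_countable_topology} \<Rightarrow> 'a \<Rightarrow> bool"
    and M :: "'a set" and \<pi> :: "'a \<Rightarrow> real" and A :: "'a set"
  assumes tvs: "tvs_ops TYPE('a)"
    and lc: "locally_convex TYPE('a)"
    and po: "partial_order_rel ge"
    and M_sub: "subspace M"
    and M_fin: "\<exists>B. finite B \<and> M = span B"
    and M_dim: "1 < dim M"
    and \<pi>_lin: "linear_on M \<pi>"
    and A1: "\<exists>U\<in>M. ge U 0 \<and> \<pi> U = 1"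
    and A2_closed: "closed A" and A2_proper: "A \<noteq> UNIV" and A2_zero: "0 \<in> A"
    and A2_mono: "\<forall>X\<in>A. \<forall>P. ge P 0 \<longrightarrow> X + P \<in> A"
    and A3_finite: "\<forall>X. adm_prices M \<pi> A X \<noteq> {} \<and> bdd_below (adm_prices M \<pi> A X)"
    and A3_cont: "continuous_on UNIV (rho M \<pi> A)"
    and poly: "polyhedral_set A"
  shows "\<forall>X. optimal_payoffs M \<pi> A X \<noteq> {}"
proof
  fix X
  obtain \<Phi> :: "(('a \<Rightarrow> real) \<times> real) set" where
    \<Phi>: "finite \<Phi>" "\<forall>(\<phi>, \<alpha>)\<in>\<Phi>. \<phi> \<in> topdual" "A = {X. \<forall>(\<phi>, \<alpha>)\<in>\<Phi>. \<phi> X \<ge> \<alpha>}"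
    using poly unfolding polyhedral_set_def by blast
  have fe: "feas M X \<Phi> {} z \<longleftrightarrow> z \<in> M \<and> X + z \<in> A" for z
    unfolding feas_def \<Phi>(3) by auto
  have lin: "\<forall>(\<phi>,\<alpha>)\<in>\<Phi> \<union> {}. linear \<phi>" using \<Phi>(2) by (auto simp: topdual_def)
  obtain z0 where z0: "z0 \<in> M" "X + z0 \<in> A"
    using A3_finite unfolding adm_prices_def by blast
  obtain b where b: "\<forall>x\<in>adm_prices M \<pi> A X. b \<le> x"
    using A3_finite unfolding bdd_below_def by blast
  have bd: "\<forall>z. feas M X \<Phi> {} z \<longrightarrow> b \<le> \<pi> z"
    using b unfolding fe adm_prices_def by blast
  obtain w where w: "feas M X \<Phi> {} w" "\<forall>z. feas M X \<Phi> {} z \<longrightarrow> \<pi> w \<le> \<pi> z"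
    using lp_attain[OF M_sub \<pi>_lin \<Phi>(1) lin bd] z0 fe by blast
  have "rho M \<pi> A X = \<pi> w"
    unfolding rho_def
  proof (rule cInf_eq_minimum)
    show "\<pi> w \<in> adm_prices M \<pi> A X" using w(1) fe unfolding adm_prices_def by blast
    show "\<And>x. x \<in> adm_prices M \<pi> A X \<Longrightarrow> \<pi> w \<le> x" using w(2) fe unfolding adm_prices_def by blast
  qed
  then have "w \<in> optimal_payoffs M \<pi> A X" using w(1) fe unfolding optimal_payoffs_def by auto
  then show "optimal_payoffs M \<pi> A X \<noteq> {}" by blast
qed

end
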